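(* The monad $\mathbb M^\bullet_\cup=(M_\cup,\eta,\mu^\bullet)$ is an IL-monad. More precisely, let $\xi:M_\cup I\to I$ be defined by $\xi(\nu)=\max\{\nu([t,1])\cdot t: t\in(0,1]\}$. Then $(I,\xi)$ is an $\mathbb M^\bullet_\cup$-algebra, and for every compactum $X$ the family of maps $\{\xi\circ M_\cup\varphi: M_\cup X\to I \mid \varphi\in C(X,I)\}$ consists of $\mathbb M^\bullet_\cup$-algebra morphisms $(M_\cup X,\mu^\bullet X)\to(I,\xi)$ and separates the points of $M_\cup X$.
   Context: A compactum is a compact Hausdorff space; $I=[0,1]$; $C(X,I)$ is the set of continuous maps $X\to I$. An (upper-semicontinuous) capacity on a compactum $X$ is a function $\nu$ from the closed subsets of $X$ to $I$ such that: (1) $\nu(X)=1$, $\nu(\emptyset)=0$; (2) if $F\subset G$ then $\nu(F)\le\nu(G)$; (3) if $\nu(F)<a$ then there is an open set $O\supset F$ with $\nu(B)<a$ for every closed $B\subset O$. $MX$ is the set of all capacities on $X$, topologized by the subbase of sets $\{c: c(F)<a\}$ ($F$ closed, $a\in I$) and $\{c: c(U)>a\}$ ($U$ open, $a\in I$), where $c(U)=\sup\{c(K):K\text{ closed},K\subset U\}$. A possibility capacity is one with $\nu(A\cup B)=\max\{\nu(A),\nu(B)\}$ for all closed $A,B$; $M_\cup X\subset MX$ is the (closed) subspace of possibility capacities. For continuous $f:X\to Y$, $M_\cup f(c)(F)=c(f^{-1}(F))$. $\eta X(x)(F)=1$ if $x\in F$, $0$ otherwise. For closed $F\subset X$ and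 $t\in I$, $F_t=\{c\in M_\cup X: c(F)\ge t\}$, and $\mu^\bullet X:M_\cup(M_\cup X)\to M_\cup X$ is $\mu^\bullet X(\mathcal C)(F)=\max\{\mathcal C(F_t)\cdot t: t\in(0,1]\}$; $(M_\cup,\eta,\mu^\bullet)$ is a monad on the category of compacta. For a monad $\mathbb T=(T,\eta,\mu)$, a $\mathbb T$-algebra is a pair $(X,\xi)$ with $\xi:TX\to X$ continuous, $\xi\circ\eta X=\mathrm{id}_X$ and $\xi\circ\mu X=\xi\circ T\xi$; a map $f:X\to Y$ is a morphism of $\mathbb T$-algebras $(X,\xi)\to(Y,\xi')$ if $\xi'\circ Tf=f\circ\xi$. (For each $X$, $(TX,\mu X)$ is a $\mathbb T$-algebra.) A monad $\mathbb T$ on compacta is an IL-monad if there is $\xi:TI\to I$ with $(I,\xi)$ a $\mathbb T$-algebra such that for every compactum $X$ there is a point-separating family of $\mathbb T$-algebra morphisms $(TX,\mu X)\to(I,\xi)$. *)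

theory Defs
  imports "HOL-Analysis.Analysis"
begin

text \<open>Capacities on a space X are represented as functions on all subsets of the
carrier type, taking their meaningful values on closed sets and (by convention)
the value 0 on non-closed sets, so that a capacity is uniquely represented.\<close>

definition compactum :: "'a topology \<Rightarrow> bool" where
  "compactum X \<longleftrightarrow> compact_space X \<and> Hausdorff_space X"

definition unit_interval :: "real topology" where
  "unit_interval = subtopology euclideanreal {0..1}"

definition capacity :: "'a topology \<Rightarrow> ('a set \<Rightarrow> real) \<Rightarrow> bool" where
  "capacity X c \<longleftrightarrow>
     (\<forall>F. \<not> closedin X F \<longrightarrow> c F = 0) \<and>
     (\<forall>F. closedin X F \<longrightarrow> 0 \<le> c F \<and> c F \<le> 1) \<and>
     c (topspace X) = 1 \<and> c {} = 0 \<and>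
     (\<forall>F G. closedin X F \<and> closedin X G \<and> F \<subseteq> G \<longrightarrow> c F \<le> c G) \<and>
     (\<forall>F a. closedin X F \<and> c F < a \<longrightarrow>
        (\<exists>W. openin X W \<and> F \<subseteq> W \<and> (\<forall>B. closedin X B \<and> B \<subseteq> W \<longrightarrow> c B < a)))"

definition possibility_capacity :: "'a topology \<Rightarrow> ('a set \<Rightarrow> real) \<Rightarrow> bool" where
  "possibility_capacity X c \<longleftrightarrow> capacity X c \<and>
     (\<forall>A B. closedin X A \<and> closedin X B \<longrightarrow> c (A \<union> B) = max (c A) (c B))"

definition cap_open :: "'a topology \<Rightarrow> ('a set \<Rightarrow> real) \<Rightarrow> 'a set \<Rightarrow> real" where
  "cap_open X c U = Sup {c K | K. closedin X K \<and> K \<subseteq> U}"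

definition M_top :: "'a topology \<Rightarrow> ('a set \<Rightarrow> real) topology" where
  "M_top X = topology_generated_by
     ({{c. capacity X c \<and> c F < a} | F a. closedin X F \<and> a \<in> {0..1}} \<union>
      {{c. capacity X c \<and> cap_open X c U > a} | U a. openin X U \<and> a \<in> {0..1}})"

definition MU_top :: "'a topology \<Rightarrow> ('a set \<Rightarrow> real) topology" where
  "MU_top X = subtopology (M_top X) {c. possibility_capacity X c}"

definition MU_map :: "'a topology \<Rightarrow> 'b topology \<Rightarrow> ('a \<Rightarrow> 'b)
                       \<Rightarrow> ('a set \<Rightarrow> real) \<Rightarrow> ('b set \<Rightarrow> real)" where
  "MU_map X Y f c = (\<lambda>F. if closedin Y F then c (f -` F \<inter> topspace X) else 0)"

definition MU_eta :: "'a topology \<Rightarrow> 'a \<Rightarrow> ('a set \<Rightarrow> real)" where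
  "MU_eta X x = (\<lambda>F. if closedin X F \<and> x \<in> F then 1 else 0)"

definition level_set :: "'a topology \<Rightarrow> 'a set \<Rightarrow> real \<Rightarrow> ('a set \<Rightarrow> real) set" where
  "level_set X F t = {c \<in> topspace (MU_top X). c F \<ge> t}"

definition MU_mu :: "'a topology \<Rightarrow> (('a set \<Rightarrow> real) set \<Rightarrow> real) \<Rightarrow> ('a set \<Rightarrow> real)" where
  "MU_mu X C = (\<lambda>F. if closedin X F
                     then Sup {C (level_set X F t) * t | t. t \<in> {0<..1}} else 0)"

definition xi :: "(real set \<Rightarrow> real) \<Rightarrow> real" where
  "xi \<nu> = Sup {\<nu> {t..1} * t | t. t \<in> {0<..1}}"

end

theory Submission
  imports Defs
begin


lemma topspace_M: "topspace (M_top X) = {c. capacity X c}"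
proof -
  have "{c. capacity X c} \<subseteq> topspace (M_top X)"
  proof
    fix c assume "c \<in> {c. capacity X c}"
    hence "c \<in> {c. capacity X c \<and> c {} < 1}" by (auto simp: capacity_def)
    moreover have "{c. capacity X c \<and> c {} < 1} \<in> {{c. capacity X c \<and> c F < a} | F a. closedin X F \<and> a \<in> {0..1}}"
      by (rule CollectI, rule exI[of _ "{}"], rule exI[of _ 1]) auto
    ultimately show "c \<in> topspace (M_top X)" unfolding M_top_def topology_generated_by_topspace by blast
  qed
  moreover have "topspace (M_top X) \<subseteq> {c. capacity X c}"
    unfolding M_top_def topology_generated_by_topspace by blast
  ultimately show ?thesis by blast
qed

lemma topspace_MU: "topspace (MU_top X) = {c. possibility_capacity X c}"
  unfolding MU_top_def using topspace_M[of X] by (auto simp: possibility_capacity_def)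

lemma openin_M_lt: assumes "closedin X F"
  shows "openin (M_top X) {c \<in> topspace (M_top X). c F < a}"
proof -
  consider "a > 1" | "a < 0" | "a \<in> {0..1}" by fastforce
  then show ?thesis
  proof cases
    case 1
    then have "{c \<in> topspace (M_top X). c F < a} = topspace (M_top X)"
      using assms by (auto simp: topspace_M capacity_def)
    then show ?thesis by (metis openin_topspace)
  next
    case 2
    then have "{c \<in> topspace (M_top X). c F < a} = {}"
      using assms by (force simp: topspace_M capacity_def)
    then show ?thesis by (metis openin_empty)
  next
    case 3
    have eq: "{c \<in> topspace (M_top X). c F < a} = {c. capacity X c \<and> c F < a}" by (auto simp: topspace_M)
    have "{c. capacity X c \<and> c F < a} \<in> {{c. capacity X c \<and> c F < a} | F a. closedin X F \<and> a \<in> {0..1}} \<union>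
      {{c. capacity X c \<and> cap_open X c U > a} | U a. openin X U \<and> a \<in> {0..1}}"
      by (rule UnI1, rule CollectI, rule exI[of _ F], rule exI[of _ a]) (use assms 3 in simp)
    then have "openin (M_top X) {c. capacity X c \<and> c F < a}" unfolding M_top_def by (rule topology_generated_by_Basis)
    then show ?thesis by (simp only: eq)
  qed
qed

lemma cap_open_bounds: assumes "capacity X c"
  shows "0 \<le> cap_open X c U" "cap_open X c U \<le> 1"
proof -
  have ne: "{c K | K. closedin X K \<and> K \<subseteq> U} \<noteq> {}" by (metis (mono_tags, lifting) closedin_empty empty_iff empty_subsetI mem_Collect_eq)
  have bd: "\<And>y. y \<in> {c K | K. closedin X K \<and> K \<subseteq> U} \<Longrightarrow> 0 \<le> y \<and> y \<le> 1"
    using assms by (auto simp: capacity_def)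
  have "c {} \<in> {c K | K. closedin X K \<and> K \<subseteq> U}" by auto
  moreover have "c {} = 0" using assms by (simp add: capacity_def)
  ultimately have "0 \<in> {c K | K. closedin X K \<and> K \<subseteq> U}" by simp
  moreover have "bdd_above {c K | K. closedin X K \<and> K \<subseteq> U}"
    by (rule bdd_aboveI[where M=1]) (use bd in blast)
  ultimately show "0 \<le> cap_open X c U" unfolding cap_open_def by (rule cSup_upper)
  show "cap_open X c U \<le> 1" unfolding cap_open_def using ne bd by (intro cSup_least) auto
qed

lemma openin_M_gt: assumes "openin X U"
  shows "openin (M_top X) {c \<in> topspace (M_top X). cap_open X c U > a}"
proof -
  consider "a \<ge> 1" | "a < 0" | "a \<in> {0..1}" by fastforce
  then show ?thesis
  proof cases
    case 1
    then have "{c \<in> topspace (M_top X). cap_open X c U > a} = {}"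
      using cap_open_bounds[of X _ U] by (fastforce simp: topspace_M)
    then show ?thesis by (metis openin_empty)
  next
    case 2
    then have "{c \<in> topspace (M_top X). cap_open X c U > a} = topspace (M_top X)"
      using cap_open_bounds[of X _ U] by (fastforce simp: topspace_M)
    then show ?thesis by (metis openin_topspace)
  next
    case 3
    have eq: "{c \<in> topspace (M_top X). cap_open X c U > a} = {c. capacity X c \<and> cap_open X c U > a}" by (auto simp: topspace_M)
    have "{c. capacity X c \<and> cap_open X c U > a} \<in> {{c. capacity X c \<and> c F < a} | F a. closedin X F \<and> a \<in> {0..1}} \<union>
      {{c. capacity X c \<and> cap_open X c U > a} | U a. openin X U \<and> a \<in> {0..1}}"
      by (rule UnI2, rule CollectI, rule exI[of _ U], rule exI[of _ a]) (use assms 3 in simp)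
    then have "openin (M_top X) {c. capacity X c \<and> cap_open X c U > a}" unfolding M_top_def by (rule topology_generated_by_Basis)
    then show ?thesis by (simp only: eq)
  qed
qed

lemma openin_MU_lt: assumes "closedin X F"
  shows "openin (MU_top X) {c \<in> topspace (MU_top X). c F < a}"
proof -
  have "{c \<in> topspace (MU_top X). c F < a} = {c \<in> topspace (M_top X). c F < a} \<inter> {c. possibility_capacity X c}"
    by (auto simp: topspace_MU topspace_M possibility_capacity_def)
  moreover have "openin (MU_top X) ({c \<in> topspace (M_top X). c F < a} \<inter> {c. possibility_capacity X c})"
    unfolding MU_top_def by (rule openin_subtopology_Int[OF openin_M_lt[OF assms]])
  ultimately show ?thesis by simp
qed

lemma openin_MU_gt: assumes "openin X U"
  shows "openin (MU_top X) {c \<in> topspace (MU_top X). cap_open X c U > a}"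
proof -
  have "{c \<in> topspace (MU_top X). cap_open X c U > a} = {c \<in> topspace (M_top X). cap_open X c U > a} \<inter> {c. possibility_capacity X c}"
    by (auto simp: topspace_MU topspace_M possibility_capacity_def)
  moreover have "openin (MU_top X) ({c \<in> topspace (M_top X). cap_open X c U > a} \<inter> {c. possibility_capacity X c})"
    unfolding MU_top_def by (rule openin_subtopology_Int[OF openin_M_gt[OF assms]])
  ultimately show ?thesis by simp
qed

lemma closedin_level_set: assumes "closedin X F"
  shows "closedin (MU_top X) (level_set X F t)"
proof -
  have "topspace (MU_top X) - level_set X F t = {c \<in> topspace (MU_top X). c F < t}"
    by (auto simp: level_set_def)
  then show ?thesis unfolding closedin_def
    using openin_MU_lt[OF assms, of t] by (auto simp: level_set_def)
qed



lemma setof_img: "{f t | t. t \<in> S} = f ` S" by blast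

lemma ne01: "{0<..(1::real)} \<noteq> {}" by auto

lemma SUP01_le: "(\<And>t. t \<in> {0<..1} \<Longrightarrow> f t \<le> (B::real)) \<Longrightarrow> Sup (f ` {0<..(1::real)}) \<le> B"
  by (rule cSUP_least[OF ne01])

lemma le_SUP01: "(\<And>t. t \<in> {0<..1} \<Longrightarrow> f t \<le> (B::real)) \<Longrightarrow> t \<in> {0<..(1::real)} \<Longrightarrow> f t \<le> Sup (f ` {0<..1})"
  by (rule cSUP_upper, simp, rule bdd_aboveI2[where M=B]) auto

lemma SUP01_gt: "(B::real) < Sup (f ` {0<..(1::real)}) \<Longrightarrow> \<exists>t\<in>{0<..1}. B < f t"
  by (meson SUP01_le not_le)

lemma cap_closed_bounds: "capacity X c \<Longrightarrow> 0 \<le> c F \<and> c F \<le> 1"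
  unfolding capacity_def by (cases "closedin X F") auto

lemma cap_mono: "capacity X c \<Longrightarrow> closedin X F \<Longrightarrow> closedin X G \<Longrightarrow> F \<subseteq> G \<Longrightarrow> c F \<le> c G"
  unfolding capacity_def by blast

lemma xi_bounds: assumes "\<And>t. t \<in> {0<..1} \<Longrightarrow> 0 \<le> \<nu> {t..1} \<and> \<nu> {t..1} \<le> 1"
  shows "0 \<le> xi \<nu> \<and> xi \<nu> \<le> 1"
proof
  have b: "\<And>t. t \<in> {0<..1} \<Longrightarrow> \<nu> {t..1} * t \<le> 1"
    using assms by (simp add: mult_le_one)
  have "\<nu> {1..1} * 1 \<le> xi \<nu>" unfolding xi_def setof_img
    by (rule le_SUP01[where f="\<lambda>t. \<nu> {t..1} * t", OF b]) auto
  then show "0 \<le> xi \<nu>" using assms[of 1] by auto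
  show "xi \<nu> \<le> 1" unfolding xi_def setof_img by (rule SUP01_le[OF b])
qed

definition Aset :: "'a topology \<Rightarrow> ('a \<Rightarrow> real) \<Rightarrow> real \<Rightarrow> 'a set" where
  "Aset X \<phi> t = {x \<in> topspace X. t \<le> \<phi> x}"

lemma closedin_interval_I: assumes "0 \<le> t" shows "closedin unit_interval {t..1}"
proof -
  have "closedin (top_of_set {0..1}) ({0..1} \<inter> {t..1})"
    by (rule closedin_closed_Int) simp
  moreover have "{0..1} \<inter> {t..1} = {t..(1::real)}" using assms by auto
  ultimately show ?thesis unfolding unit_interval_def by (simp only:)
qed

lemma Aset_closed: assumes "continuous_map X unit_interval \<phi>" shows "closedin X (Aset X \<phi> t)"
proof -
  have "continuous_map X euclideanreal \<phi>" using assms unfolding unit_interval_def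
    using continuous_map_in_subtopology by blast
  then have "closedin X {x \<in> topspace X. \<phi> x \<in> {t..}}"
    by (rule closedin_continuous_map_preimage) simp
  then show ?thesis by (simp add: Aset_def)
qed

lemma phi_range: "continuous_map X unit_interval \<phi> \<Longrightarrow> x \<in> topspace X \<Longrightarrow> \<phi> x \<in> {0..1}"
  unfolding unit_interval_def by (force simp: continuous_map_in_subtopology Pi_iff)

lemma MU_map_A: assumes "continuous_map X unit_interval \<phi>" "t \<le> 1" "0 \<le> t"
  shows "MU_map X unit_interval \<phi> c {t..1} = c (Aset X \<phi> t)"
proof -
  have "\<phi> -` {t..1} \<inter> topspace X = Aset X \<phi> t"
    using phi_range[OF assms(1)] by (auto simp: Aset_def)
  then show ?thesis unfolding MU_map_def using closedin_interval_I[OF assms(3)] by simp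
qed

lemma Aset_anti: "s \<le> t \<Longrightarrow> Aset X \<phi> t \<subseteq> Aset X \<phi> s"
  unfolding Aset_def by auto

lemma g_eq: assumes "continuous_map X unit_interval \<phi>"
  shows "(xi \<circ> MU_map X unit_interval \<phi>) c = Sup ((\<lambda>t. c (Aset X \<phi> t) * t) ` {0<..1})"
proof -
  have "(\<lambda>t. MU_map X unit_interval \<phi> c {t..1} * t) ` {0<..1} = (\<lambda>t. c (Aset X \<phi> t) * t) ` {0<..1}"
    using MU_map_A[OF assms] by (intro image_cong) auto
  then show ?thesis unfolding comp_def xi_def setof_img by simp
qed

lemma G_bound: "capacity X c \<Longrightarrow> t \<in> {0<..1} \<Longrightarrow> c (Aset X \<phi> t) * t \<le> 1 \<and> 0 \<le> c (Aset X \<phi> t) * t"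
  using cap_closed_bounds[of X c "Aset X \<phi> t"] by (simp add: mult_le_one)

lemma g_bounds: assumes "continuous_map X unit_interval \<phi>" "capacity X c"
  shows "0 \<le> (xi \<circ> MU_map X unit_interval \<phi>) c \<and> (xi \<circ> MU_map X unit_interval \<phi>) c \<le> 1"
proof -
  have "c (Aset X \<phi> 1) * 1 \<le> Sup ((\<lambda>t. c (Aset X \<phi> t) * t) ` {0<..1})"
    by (rule le_SUP01) (use G_bound[OF assms(2)] in auto)
  moreover have "Sup ((\<lambda>t. c (Aset X \<phi> t) * t) ` {0<..1}) \<le> 1"
    by (rule SUP01_le) (use G_bound[OF assms(2)] in auto)
  ultimately show ?thesis using G_bound[OF assms(2), of 1 \<phi>] g_eq[OF assms(1)] by auto
qed



lemma capset_ne: "{c K | K. closedin X K \<and> K \<subseteq> U} \<noteq> {}"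
  by (metis (mono_tags, lifting) closedin_empty empty_iff empty_subsetI mem_Collect_eq)

lemma capset_bdd: "capacity X c \<Longrightarrow> bdd_above {c K | K. closedin X K \<and> K \<subseteq> U}"
  by (rule bdd_aboveI[where M=1]) (auto dest: cap_closed_bounds)

lemma MU_cap: "c \<in> topspace (MU_top X) \<Longrightarrow> capacity X c"
  by (simp add: topspace_MU possibility_capacity_def)

lemma g_lower: assumes \<phi>: "continuous_map X unit_interval \<phi>"
  shows "openin (MU_top X) {c \<in> topspace (MU_top X). (xi \<circ> MU_map X unit_interval \<phi>) c > a}"
proof (cases "a < 0")
  case True
  then have "{c \<in> topspace (MU_top X). (xi \<circ> MU_map X unit_interval \<phi>) c > a} = topspace (MU_top X)"
    using g_bounds[OF \<phi>] MU_cap by fastforce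
  then show ?thesis by (metis openin_topspace)
next
  case False
  show ?thesis
  proof (subst openin_subopen, intro ballI)
    fix c assume c: "c \<in> {c \<in> topspace (MU_top X). a < (xi \<circ> MU_map X unit_interval \<phi>) c}"
    then have cap: "capacity X c" using MU_cap by blast
    from c have "a < Sup ((\<lambda>t. c (Aset X \<phi> t) * t) ` {0<..1})" using g_eq[OF \<phi>] by simp
    then obtain t where t: "t \<in> {0<..1}" "a < c (Aset X \<phi> t) * t" using SUP01_gt by blast
    define cA where "cA = c (Aset X \<phi> t)"
    have cA0: "0 < cA"
    proof (rule ccontr)
      assume "\<not> 0 < cA" hence "cA * t \<le> 0" using t by (simp add: mult_nonpos_nonneg)
      thus False using t False unfolding cA_def by linarith
    qed
    have "a / cA < t" using t cA0 by (simp add: pos_divide_less_eq cA_def mult.commute)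
    have a0: "0 \<le> a / cA" using False cA0 by simp
    obtain t' where t'p: "0 < t'" "t' < t" "a / cA < t'"
    proof -
      define q where "q = a / cA"
      have "0 < (q + t) / 2" "(q + t) / 2 < t" "q < (q + t) / 2" using \<open>a / cA < t\<close> a0 unfolding q_def[symmetric] by auto
      then show ?thesis using that unfolding q_def by blast
    qed
    have "a < t' * cA" using t'p(3) cA0 by (simp add: pos_divide_less_eq)
    hence at': "a / t' < cA" using t'p(1) by (simp add: pos_divide_less_eq mult.commute)
    define U where "U = {x \<in> topspace X. \<phi> x \<in> {t'<..}}"
    have "continuous_map X euclideanreal \<phi>" using \<phi> unfolding unit_interval_def
      using continuous_map_in_subtopology by blast
    hence Uo: "openin X U" unfolding U_def by (rule openin_continuous_map_preimage) simp
    have AU: "Aset X \<phi> t \<subseteq> U" using t'p by (auto simp: Aset_def U_def)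
    have UA: "U \<subseteq> Aset X \<phi> t'" by (auto simp: Aset_def U_def)
    let ?T = "{d \<in> topspace (MU_top X). cap_open X d U > a / t'}"
    show "\<exists>T. openin (MU_top X) T \<and> c \<in> T \<and> T \<subseteq> {c \<in> topspace (MU_top X). a < (xi \<circ> MU_map X unit_interval \<phi>) c}"
    proof (intro exI conjI)
      show "openin (MU_top X) ?T" by (rule openin_MU_gt[OF Uo])
      have "cA \<in> {c K | K. closedin X K \<and> K \<subseteq> U}"
        unfolding cA_def using AU Aset_closed[OF \<phi>] by blast
      hence "cA \<le> cap_open X c U" unfolding cap_open_def
        by (rule cSup_upper[OF _ capset_bdd[OF cap]])
      then show "c \<in> ?T" using c at' by auto
      show "?T \<subseteq> {c \<in> topspace (MU_top X). a < (xi \<circ> MU_map X unit_interval \<phi>) c}"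
      proof
        fix d assume d: "d \<in> ?T"
        hence capd: "capacity X d" using MU_cap by blast
        have "a / t' < Sup {d K | K. closedin X K \<and> K \<subseteq> U}" using d by (simp add: cap_open_def)
        then obtain K where K: "closedin X K" "K \<subseteq> U" "a / t' < d K"
          using less_cSup_iff[OF capset_ne capset_bdd[OF capd]] by blast
        have "d K \<le> d (Aset X \<phi> t')" using cap_mono[OF capd K(1) Aset_closed[OF \<phi>]] K(2) UA by blast
        moreover have "a < d K * t'" using K(3) t'p by (simp add: pos_divide_less_eq)
        ultimately have "a < d (Aset X \<phi> t') * t'" using t'p(1)
          by (meson less_le_trans mult_right_mono less_imp_le)
        also have "\<dots> \<le> Sup ((\<lambda>t. d (Aset X \<phi> t) * t) ` {0<..1})"
          by (rule le_SUP01) (use G_bound[OF capd] t'p t in auto)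
        finally have "a < (xi \<circ> MU_map X unit_interval \<phi>) d" using g_eq[OF \<phi>] by simp
        then show "d \<in> {c \<in> topspace (MU_top X). a < (xi \<circ> MU_map X unit_interval \<phi>) c}" using d by auto
      qed
    qed
  qed
qed



lemma g_upper: assumes \<phi>: "continuous_map X unit_interval \<phi>"
  shows "openin (MU_top X) {c \<in> topspace (MU_top X). (xi \<circ> MU_map X unit_interval \<phi>) c < a}"
proof (subst openin_subopen, intro ballI)
  fix c assume c: "c \<in> {c \<in> topspace (MU_top X). (xi \<circ> MU_map X unit_interval \<phi>) c < a}"
  then have cap: "capacity X c" using MU_cap by blast
  define gc where "gc = (xi \<circ> MU_map X unit_interval \<phi>) c"
  have gc: "0 \<le> gc" "gc < a" using c g_bounds[OF \<phi> cap] unfolding gc_def by auto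
  have gceq: "gc = Sup ((\<lambda>t. c (Aset X \<phi> t) * t) ` {0<..1})" using g_eq[OF \<phi>] unfolding gc_def by simp
  obtain n :: nat where n: "2 / (a - gc) < real n" using reals_Archimedean2 by blast
  define N where "N = n + 2"
  have N2: "2 \<le> N" unfolding N_def by simp
  have Npos: "0 < real N" using N2 by simp
  have "2 / (a - gc) < real N" using n unfolding N_def by simp
  hence "2 < real N * (a - gc)" using gc by (simp add: pos_divide_less_eq mult.commute)
  hence N: "2 / real N < a - gc" using Npos by (simp add: divide_less_eq mult.commute)
  define b where "b k = (gc + 2 / real N) / ((real k + 1) / real N)" for k :: nat
  define T where "T = (\<Inter>k\<in>{1..<N}. {d \<in> topspace (MU_top X). d (Aset X \<phi> (real k / real N)) < b k}) \<inter> topspace (MU_top X)"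
  show "\<exists>T. openin (MU_top X) T \<and> c \<in> T \<and> T \<subseteq> {c \<in> topspace (MU_top X). (xi \<circ> MU_map X unit_interval \<phi>) c < a}"
  proof (intro exI conjI)
    show "openin (MU_top X) T" unfolding T_def
      by (rule openin_INT) (auto intro: openin_MU_lt[OF Aset_closed[OF \<phi>]])
    have "c (Aset X \<phi> (real k / real N)) < b k" if k: "k \<in> {1..<N}" for k
    proof -
      have kN: "real k / real N \<in> {0<..1}" using k Npos by auto
      let ?x = "c (Aset X \<phi> (real k / real N))"
      have x01: "0 \<le> ?x" "?x \<le> 1" using cap_closed_bounds[OF cap] by auto
      have "?x * (real k / real N) \<le> gc" unfolding gceq
        by (rule le_SUP01[OF _ kN]) (use G_bound[OF cap] in auto)
      moreover have "?x * ((real k + 1) / real N) = ?x * (real k / real N) + ?x / real N"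
        by (simp add: add_divide_distrib distrib_left)
      moreover have "?x / real N \<le> 1 / real N" using x01 Npos by (simp add: divide_right_mono)
      moreover have "1 / real N < 2 / real N" using Npos by (simp add: divide_strict_right_mono)
      ultimately have "?x * ((real k + 1) / real N) < gc + 2 / real N" by linarith
      moreover have "0 < (real k + 1) / real N" using Npos by simp
      ultimately show ?thesis unfolding b_def by (metis pos_less_divide_eq)
    qed
    then show "c \<in> T" unfolding T_def using c by auto
    show "T \<subseteq> {c \<in> topspace (MU_top X). (xi \<circ> MU_map X unit_interval \<phi>) c < a}"
    proof
      fix d assume d: "d \<in> T"
      hence dts: "d \<in> topspace (MU_top X)" unfolding T_def by blast
      hence capd: "capacity X d" using MU_cap by blast
      have dk: "d (Aset X \<phi> (real k / real N)) < b k" if "k \<in> {1..<N}" for k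
        using d that unfolding T_def by blast
      have "Sup ((\<lambda>t. d (Aset X \<phi> t) * t) ` {0<..1}) \<le> gc + 2 / real N"
      proof (rule SUP01_le)
        fix t :: real assume t: "t \<in> {0<..1}"
        define k where "k = min (nat \<lfloor>t * real N\<rfloor>) (N - 1)"
        have dt: "0 \<le> d (Aset X \<phi> t)" "d (Aset X \<phi> t) \<le> 1" using cap_closed_bounds[OF capd] by auto
        have fl: "real (nat \<lfloor>t * real N\<rfloor>) \<le> t * real N" "t * real N < real (nat \<lfloor>t * real N\<rfloor>) + 1"
          using t Npos by (auto simp: of_nat_nat)
        show "d (Aset X \<phi> t) * t \<le> gc + 2 / real N"
        proof (cases "k = 0")
          case True
          have "N - 1 \<noteq> 0" using N2 by simp
          then have "nat \<lfloor>t * real N\<rfloor> = 0" using True unfolding k_def by (metis min_def)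
          then have "t * real N < 1" using fl by simp
          then have "t < 1 / real N" using Npos by (simp add: pos_less_divide_eq)
          moreover have "d (Aset X \<phi> t) * t \<le> t" using dt t by (simp add: mult_left_le_one_le)
          moreover have "1 / real N \<le> 2 / real N" using Npos by (simp add: divide_right_mono)
          ultimately show ?thesis using gc by linarith
        next
          case False
          have "k \<le> N - 1" unfolding k_def by simp
          then have kI: "k \<in> {1..<N}" using False N2 by auto
          have k1: "real k \<le> t * real N" unfolding k_def using fl by (simp add: min_def)
          have k2: "t * real N \<le> real k + 1"
          proof (cases "nat \<lfloor>t * real N\<rfloor> \<le> N - 1")
            case True then show ?thesis unfolding k_def using fl by (simp add: min_def)
          next
            case False
            then have "k = N - 1" unfolding k_def by simp
            then have "real k + 1 = real N" using N2 by simp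
            then show ?thesis using t Npos by simp
          qed
          have lo: "real k / real N \<le> t" using k1 Npos by (simp add: divide_le_eq)
          have hi: "t \<le> (real k + 1) / real N" using k2 Npos by (simp add: le_divide_eq)
          have "d (Aset X \<phi> t) \<le> d (Aset X \<phi> (real k / real N))"
            by (rule cap_mono[OF capd Aset_closed[OF \<phi>] Aset_closed[OF \<phi>] Aset_anti[OF lo]])
          then have "d (Aset X \<phi> t) * t \<le> d (Aset X \<phi> (real k / real N)) * ((real k + 1) / real N)"
            by (rule mult_mono) (use hi dt t cap_closed_bounds[OF capd] in auto)
          also have "\<dots> \<le> b k * ((real k + 1) / real N)"
            using dk[OF kI] Npos by (intro mult_right_mono) auto
          also have "\<dots> = gc + 2 / real N" unfolding b_def using Npos by simp
          finally show ?thesis .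
        qed
      qed
      then have "(xi \<circ> MU_map X unit_interval \<phi>) d < a" using g_eq[OF \<phi>, of d] N by simp
      then show "d \<in> {c \<in> topspace (MU_top X). (xi \<circ> MU_map X unit_interval \<phi>) c < a}" using dts by blast
    qed
  qed
qed

lemma g_cont: assumes \<phi>: "continuous_map X unit_interval \<phi>"
  shows "continuous_map (MU_top X) unit_interval (xi \<circ> MU_map X unit_interval \<phi>)"
proof -
  have 1: "\<forall>x\<in>topspace (MU_top X). (xi \<circ> MU_map X unit_interval \<phi>) x \<in> {0..1}"
    using g_bounds[OF \<phi> MU_cap] by auto
  have "continuous_map (MU_top X) (subtopology euclideanreal {0..1}) (xi \<circ> MU_map X unit_interval \<phi>)"
    using continuous_map_upper_lower_semicontinuous_lt_gen[of "MU_top X" "{0..1::real}" "xi \<circ> MU_map X unit_interval \<phi>"]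
      1 g_lower[OF \<phi>] g_upper[OF \<phi>] by blast
  then show ?thesis by (simp only: unit_interval_def)
qed



lemma poss_union_le:
  assumes pc: "possibility_capacity Y C" and fin: "finite K" "K \<noteq> {}"
    and cl: "\<And>k. k \<in> K \<Longrightarrow> closedin Y (F k)"
  shows "\<exists>k\<in>K. C (\<Union>k\<in>K. F k) \<le> C (F k)"
  using fin cl
proof (induction K rule: finite_ne_induct)
  case (singleton x) then show ?case by simp
next
  case (insert x K)
  then obtain k where k: "k \<in> K" "C (\<Union>k\<in>K. F k) \<le> C (F k)" by auto
  have clU: "closedin Y (\<Union>k\<in>K. F k)" using insert by (intro closedin_Union) auto
  have eq: "C (\<Union>k\<in>insert x K. F k) = max (C (F x)) (C (\<Union>k\<in>K. F k))"
    using pc clU insert.prems unfolding possibility_capacity_def by simp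
  show ?case
  proof (cases "C (F x) \<le> C (\<Union>k\<in>K. F k)")
    case True then show ?thesis using eq k by (intro bexI[of _ k]) auto
  next
    case False then show ?thesis using eq by (intro bexI[of _ x]) auto
  qed
qed

lemma MU_mu_A: assumes "continuous_map X unit_interval \<phi>"
  shows "MU_mu X C (Aset X \<phi> t) = Sup ((\<lambda>s. C (level_set X (Aset X \<phi> t) s) * s) ` {0<..1})"
  unfolding MU_mu_def setof_img using Aset_closed[OF assms] by simp

lemma morph:
  assumes \<phi>: "continuous_map X unit_interval \<phi>" and C: "C \<in> topspace (MU_top (MU_top X))"
  shows "xi (MU_map (MU_top X) unit_interval (xi \<circ> MU_map X unit_interval \<phi>) C)
         = (xi \<circ> MU_map X unit_interval \<phi>) (MU_mu X C)"
proof -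
  define g where "g = xi \<circ> MU_map X unit_interval \<phi>"
  have gc: "continuous_map (MU_top X) unit_interval g" unfolding g_def by (rule g_cont[OF \<phi>])
  have pcC: "possibility_capacity (MU_top X) C" using C by (simp add: topspace_MU)
  hence capC: "capacity (MU_top X) C" by (simp add: possibility_capacity_def)
  define A where "A t = Aset X \<phi> t" for t
  define S where "S r = Aset (MU_top X) g r" for r
  define L where "L t s = level_set X (A t) s" for t s
  define H where "H t = Sup ((\<lambda>s. C (L t s) * s) ` {0<..1})" for t
  define P where "P = Sup ((\<lambda>r. C (S r) * r) ` {0<..1})"
  define Q where "Q = Sup ((\<lambda>t. H t * t) ` {0<..1})"
  have geq: "g c = Sup ((\<lambda>t. c (A t) * t) ` {0<..1})" for c
    unfolding g_def A_def using g_eq[OF \<phi>] by simp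
  have LHS: "xi (MU_map (MU_top X) unit_interval g C) = P"
    using g_eq[OF gc, of C] unfolding P_def S_def by simp
  have RHS: "g (MU_mu X C) = Q"
    unfolding geq Q_def H_def L_def A_def using MU_mu_A[OF \<phi>] by simp
  have Ccl: "0 \<le> C F \<and> C F \<le> 1" for F using cap_closed_bounds[OF capC] by blast
  have Scl: "closedin (MU_top X) (S r)" for r unfolding S_def by (rule Aset_closed[OF gc])
  have Acl: "closedin X (A t)" for t unfolding A_def by (rule Aset_closed[OF \<phi>])
  have Lcl: "closedin (MU_top X) (L t s)" for t s unfolding L_def by (rule closedin_level_set[OF Acl])
  have Hb: "0 \<le> H t \<and> H t \<le> 1" for t
  proof -
    have b: "\<And>s. s \<in> {0<..1} \<Longrightarrow> C (L t s) * s \<le> 1" using Ccl by (simp add: mult_le_one)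
    have "C (L t 1) * 1 \<le> H t" unfolding H_def by (rule le_SUP01[where B=1, OF b]) auto
    moreover have "H t \<le> 1" unfolding H_def by (rule SUP01_le[OF b])
    ultimately show ?thesis using Ccl[of "L t 1"] by simp
  qed
  have HQ: "H t * t \<le> Q" if "t \<in> {0<..1}" for t
    unfolding Q_def by (rule le_SUP01[where B=1, OF _ that]) (use Hb in \<open>simp add: mult_le_one\<close>)
  have Q0: "0 \<le> Q" using HQ[of 1] Hb[of 1] by simp
  have SP: "C (S r) * r \<le> P" if "r \<in> {0<..1}" for r
    unfolding P_def by (rule le_SUP01[where B=1, OF _ that]) (use Ccl in \<open>simp add: mult_le_one\<close>)
  have cA: "0 \<le> c (A t) \<and> c (A t) \<le> 1" if "c \<in> topspace (MU_top X)" for c t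
    using cap_closed_bounds[OF MU_cap[OF that]] by blast
  have "Q \<le> P" unfolding Q_def
  proof (rule SUP01_le)
    fix t :: real assume t: "t \<in> {0<..1}"
    have "H t \<le> P / t" unfolding H_def
    proof (rule SUP01_le)
      fix s :: real assume s: "s \<in> {0<..1}"
      have st: "s * t \<in> {0<..1}" using s t by (auto simp: mult_le_one)
      have "L t s \<subseteq> S (s * t)"
      proof
        fix c assume c: "c \<in> L t s"
        hence cts: "c \<in> topspace (MU_top X)" and cs: "s \<le> c (A t)"
          unfolding L_def level_set_def by auto
        have "s * t \<le> c (A t) * t" using cs t by (simp add: mult_right_mono)
        also have "\<dots> \<le> g c" unfolding geq
          by (rule le_SUP01[where B=1, OF _ t]) (use cA[OF cts] in \<open>simp add: mult_le_one\<close>)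
        finally show "c \<in> S (s * t)" using cts unfolding S_def Aset_def by simp
      qed
      hence "C (L t s) \<le> C (S (s * t))" by (rule cap_mono[OF capC Lcl Scl])
      hence "C (L t s) * (s * t) \<le> C (S (s * t)) * (s * t)" using st by (simp add: mult_right_mono)
      also have "\<dots> \<le> P" by (rule SP[OF st])
      finally have "C (L t s) * s * t \<le> P" by (simp add: mult.assoc)
      then show "C (L t s) * s \<le> P / t" using t by (simp add: pos_le_divide_eq)
    qed
    then show "H t * t \<le> P" using t by (simp add: pos_le_divide_eq)
  qed
  moreover have "P \<le> Q" unfolding P_def
  proof (rule SUP01_le)
    fix r :: real assume r: "r \<in> {0<..1}"
    show "C (S r) * r \<le> Q"
    proof (rule ccontr)
      assume "\<not> C (S r) * r \<le> Q"
      hence gt: "Q < C (S r) * r" by simp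
      define cs where "cs = C (S r)"
      have cs0: "0 < cs"
      proof (rule ccontr)
        assume "\<not> 0 < cs" hence "cs * r \<le> 0" using r by (simp add: mult_nonpos_nonneg)
        thus False using gt Q0 unfolding cs_def by linarith
      qed
      obtain n :: nat where n: "2 * cs / (cs * r - Q) < real n" using reals_Archimedean2 by blast
      define N where "N = n + 1"
      have Npos: "0 < real N" unfolding N_def by simp
      have "2 * cs / (cs * r - Q) < real N" using n unfolding N_def by simp
      hence "2 * cs < real N * (cs * r - Q)" using gt unfolding cs_def by (simp add: pos_divide_less_eq mult.commute)
      hence key: "cs * (2 / real N) < cs * r - Q" using Npos by (simp add: field_simps)
      define \<epsilon> where "\<epsilon> = 2 / real N"
      have rpos: "0 < r - \<epsilon>"
      proof -
        have "0 < cs * (r - \<epsilon>)" using key Q0 unfolding \<epsilon>_def by (simp add: right_diff_distrib)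
        thus ?thesis using cs0 by (simp add: zero_less_mult_iff)
      qed
      define sk where "sk k = (r - \<epsilon>) / (real k / real N)" for k :: nat
      have cover: "S r \<subseteq> (\<Union>k\<in>{1..N}. L (real k / real N) (sk k))"
      proof
        fix c assume c: "c \<in> S r"
        hence cts: "c \<in> topspace (MU_top X)" and cr: "r \<le> g c" unfolding S_def Aset_def by auto
        have "0 < 1 / real N" using Npos by simp
        hence "r - 1 / real N < Sup ((\<lambda>t. c (A t) * t) ` {0<..1})" using cr geq[of c] by linarith
        then obtain t where t: "t \<in> {0<..1}" "r - 1 / real N < c (A t) * t" using SUP01_gt by blast
        define j where "j = nat \<lfloor>t * real N\<rfloor>"
        have fl: "real j \<le> t * real N" "t * real N < real j + 1"
          using t Npos unfolding j_def by (auto simp: of_nat_nat)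
        have j0: "j \<noteq> 0"
        proof
          assume "j = 0"
          hence "t < 1 / real N" using fl Npos by (simp add: pos_less_divide_eq)
          moreover have "c (A t) * t \<le> t" using cA[OF cts] t by (simp add: mult_left_le_one_le)
          moreover have "2 / real N = 1 / real N + 1 / real N" by simp
          ultimately have "r < 2 / real N" using t(2) by linarith
          thus False using rpos unfolding \<epsilon>_def by simp
        qed
        have "t * real N \<le> real N" using t Npos by simp
        hence jN: "j \<le> N" using fl by linarith
        have lo: "real j / real N \<le> t" using fl Npos by (simp add: divide_le_eq)
        have hi: "t - 1 / real N < real j / real N"
        proof -
          have "(t * real N - 1) / real N < real j / real N"
            using fl Npos by (intro divide_strict_right_mono) auto
          moreover have "(t * real N - 1) / real N = t - 1 / real N" using Npos by (simp add: diff_divide_distrib)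
          ultimately show ?thesis by simp
        qed
        have mono: "c (A t) \<le> c (A (real j / real N))"
          unfolding A_def by (rule cap_mono[OF MU_cap[OF cts] Aset_closed[OF \<phi>] Aset_closed[OF \<phi>] Aset_anti[OF lo]])
        have "c (A t) * t - 1 / real N \<le> c (A t) * (t - 1 / real N)"
          using cA[OF cts, of t] Npos by (simp add: right_diff_distrib divide_right_mono)
        also have "\<dots> \<le> c (A (real j / real N)) * (real j / real N)"
        proof -
          have "1 / real N \<le> real j / real N" using j0 Npos by (intro divide_right_mono) auto
          hence "0 \<le> t - 1 / real N" using lo by linarith
          thus ?thesis using mono hi cA[OF cts] by (intro mult_mono) auto
        qed
        finally have "r - \<epsilon> < c (A (real j / real N)) * (real j / real N)" using t(2) unfolding \<epsilon>_def by simp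
        moreover have jpos: "0 < real j / real N" using j0 Npos by simp
        ultimately have "sk j < c (A (real j / real N))" unfolding sk_def
          by (subst pos_divide_less_eq[OF jpos])
        hence "c \<in> L (real j / real N) (sk j)" unfolding L_def level_set_def using cts by simp
        then show "c \<in> (\<Union>k\<in>{1..N}. L (real k / real N) (sk k))" using j0 jN by auto
      qed
      have clU: "closedin (MU_top X) (\<Union>k\<in>{1..N}. L (real k / real N) (sk k))"
        by (intro closedin_Union) (auto intro: Lcl)
      have "cs \<le> C (\<Union>k\<in>{1..N}. L (real k / real N) (sk k))"
        unfolding cs_def by (rule cap_mono[OF capC Scl clU cover])
      moreover obtain k where k: "k \<in> {1..N}" "C (\<Union>k\<in>{1..N}. L (real k / real N) (sk k)) \<le> C (L (real k / real N) (sk k))"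
        using poss_union_le[OF pcC, of "{1..N}" "\<lambda>k. L (real k / real N) (sk k)"] Lcl Npos by auto
      ultimately have csk: "cs \<le> C (L (real k / real N) (sk k))" by linarith
      have kN: "real k / real N \<in> {0<..1}" using k Npos by auto
      have "0 < real k / real N" using kN by simp
      hence skpos: "0 < sk k" unfolding sk_def by (rule divide_pos_pos[OF rpos])
      have eqr: "r - \<epsilon> = sk k * (real k / real N)" unfolding sk_def using \<open>0 < real k / real N\<close> by (metis less_irrefl nonzero_divide_eq_eq)
      have "cs * (r - \<epsilon>) \<le> Q"
      proof (cases "sk k \<le> 1")
        case True
        have "cs * (r - \<epsilon>) \<le> C (L (real k / real N) (sk k)) * sk k * (real k / real N)"
        proof -
          have "0 \<le> sk k * (real k / real N)" using skpos \<open>0 < real k / real N\<close> by simp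
          hence "cs * (sk k * (real k / real N)) \<le> C (L (real k / real N) (sk k)) * (sk k * (real k / real N))"
            by (rule mult_right_mono[OF csk])
          thus ?thesis unfolding eqr by (simp only: mult.assoc)
        qed
        also have "\<dots> \<le> H (real k / real N) * (real k / real N)"
        proof -
          have "C (L (real k / real N) (sk k)) * sk k \<le> H (real k / real N)" unfolding H_def
            by (rule le_SUP01[where B=1]) (use Ccl True skpos in \<open>auto simp: mult_le_one\<close>)
          moreover have "0 \<le> real k / real N" using kN by simp
          ultimately show ?thesis by (rule mult_right_mono)
        qed
        also have "\<dots> \<le> Q" by (rule HQ[OF kN])
        finally show ?thesis .
      next
        case False
        have "L (real k / real N) (sk k) = {}" unfolding L_def level_set_def
        proof (intro equals0I)
          fix c assume "c \<in> {c \<in> topspace (MU_top X). sk k \<le> c (A (real k / real N))}"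
          thus False using False cA[of c "real k / real N"] by auto
        qed
        hence "C (L (real k / real N) (sk k)) = 0" using capC by (simp add: capacity_def)
        thus ?thesis using csk cs0 by simp
      qed
      thus False using key unfolding \<epsilon>_def by (simp add: right_diff_distrib)
    qed
  qed
  ultimately have "P = Q" by linarith
  then have "xi (MU_map (MU_top X) unit_interval g C) = g (MU_mu X C)" by (simp only: LHS RHS)
  then show ?thesis by (simp only: g_def)
qed



lemma topspace_I: "topspace unit_interval = {0..1}"
  by (simp add: unit_interval_def)

lemma id_cont_I: "continuous_map unit_interval unit_interval id"
  by (rule continuous_map_id)

lemma xi_id: "xi (MU_map unit_interval unit_interval id \<nu>) = xi \<nu>"
proof -
  have "\<And>t. t \<in> {0<..1} \<Longrightarrow> MU_map unit_interval unit_interval id \<nu> {t..1} = \<nu> {t..1}"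
  proof -
    fix t :: real assume t: "t \<in> {0<..1}"
    have "MU_map unit_interval unit_interval id \<nu> {t..1} = \<nu> (Aset unit_interval id t)"
      using MU_map_A[OF id_cont_I] t by simp
    moreover have "Aset unit_interval id t = {t..1}" using t by (auto simp: Aset_def topspace_I)
    ultimately show "MU_map unit_interval unit_interval id \<nu> {t..1} = \<nu> {t..1}" by simp
  qed
  then have "(\<lambda>t. MU_map unit_interval unit_interval id \<nu> {t..1} * t) ` {0<..1} = (\<lambda>t. \<nu> {t..1} * t) ` {0<..1}"
    by (intro image_cong) auto
  then show ?thesis unfolding xi_def setof_img by simp
qed

lemma xi_comp_id: "xi \<circ> MU_map unit_interval unit_interval id = xi"
  by (rule ext) (simp add: xi_id)

lemma xi_eta: assumes x: "x \<in> {0..1::real}" shows "xi (MU_eta unit_interval x) = x"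
proof -
  have e: "MU_eta unit_interval x {t..1} = (if t \<le> x then 1 else 0)" if "t \<in> {0<..1}" for t
    using closedin_interval_I[of t] that x unfolding MU_eta_def by auto
  have img: "(\<lambda>t. MU_eta unit_interval x {t..1} * t) ` {0<..1} = (\<lambda>t. (if t \<le> x then 1 else 0) * t) ` {0<..1}"
    by (intro image_cong) (auto simp: e)
  have "Sup ((\<lambda>t. (if t \<le> x then 1 else 0) * t) ` {0<..1}) = x"
  proof (rule antisym)
    show "Sup ((\<lambda>t. (if t \<le> x then 1 else 0) * t) ` {0<..1}) \<le> x"
      by (rule SUP01_le) (use x in auto)
    show "x \<le> Sup ((\<lambda>t. (if t \<le> x then 1 else (0::real)) * t) ` {0<..1})"
    proof (cases "x = 0")
      case True
      have "(if (1::real) \<le> x then 1 else 0) * 1 \<le> Sup ((\<lambda>t. (if t \<le> x then 1 else (0::real)) * t) ` {0<..1})"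
        by (rule le_SUP01[where B=1]) auto
      then show ?thesis using True by simp
    next
      case False
      hence "x \<in> {0<..1}" using x by auto
      have "(if x \<le> x then 1 else 0) * x \<le> Sup ((\<lambda>t. (if t \<le> x then 1 else (0::real)) * t) ` {0<..1})"
        by (rule le_SUP01[where B=1, OF _ \<open>x \<in> {0<..1}\<close>]) auto
      then show ?thesis by simp
    qed
  qed
  then show ?thesis unfolding xi_def setof_img img .
qed

lemma sep_lemma:
  assumes nX: "normal_space X" and c: "c \<in> topspace (MU_top X)" and d: "d \<in> topspace (MU_top X)"
    and F: "closedin X F" and lt: "c F < d F"
  shows "\<exists>\<phi>. continuous_map X unit_interval \<phi> \<and>
           (xi \<circ> MU_map X unit_interval \<phi>) c \<noteq> (xi \<circ> MU_map X unit_interval \<phi>) d"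
proof -
  have capc: "capacity X c" and capd: "capacity X d" using c d MU_cap by blast+
  define a where "a = (c F + d F) / 2"
  have ca: "c F < a" and ad: "a < d F" using lt unfolding a_def by auto
  have a0: "0 \<le> a" using cap_closed_bounds[OF capc, of F] ca by linarith
  have "\<exists>W. openin X W \<and> F \<subseteq> W \<and> (\<forall>B. closedin X B \<and> B \<subseteq> W \<longrightarrow> c B < a)"
    using capc F ca unfolding capacity_def by blast
  then obtain W where W: "openin X W" "F \<subseteq> W" and Wb: "\<And>B. closedin X B \<Longrightarrow> B \<subseteq> W \<Longrightarrow> c B < a"
    by blast
  have cl: "closedin X (topspace X - W)" using W(1) by (rule closedin_diff[OF closedin_topspace])
  have dj: "disjnt (topspace X - W) F" using W(2) by (auto simp: disjnt_def)
  have U: "\<forall>S T. closedin X S \<and> closedin X T \<and> disjnt S T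
            \<longrightarrow> (\<exists>f::'a\<Rightarrow>real. continuous_map X (top_of_set {0..1}) f \<and> f ` S \<subseteq> {0} \<and> f ` T \<subseteq> {1})"
    using nX by (simp only: normal_space_iff_Urysohn)
  obtain f :: "'a \<Rightarrow> real" where f: "continuous_map X (top_of_set {0..1}) f"
      "f ` (topspace X - W) \<subseteq> {0}" "f ` F \<subseteq> {1}"
    using U[rule_format, OF conjI[OF cl conjI[OF F dj]]] by blast
  have fc: "continuous_map X unit_interval f" using f(1) by (simp add: unit_interval_def)
  have "(xi \<circ> MU_map X unit_interval f) c \<le> a"
    unfolding g_eq[OF fc]
  proof (rule SUP01_le)
    fix t :: real assume t: "t \<in> {0<..1}"
    have "Aset X f t \<subseteq> W"
    proof
      fix x assume x: "x \<in> Aset X f t"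
      show "x \<in> W"
      proof (rule ccontr)
        assume "x \<notin> W"
        hence "f x = 0" using x f(2) by (auto simp: Aset_def)
        thus False using x t by (auto simp: Aset_def)
      qed
    qed
    hence "c (Aset X f t) < a" by (rule Wb[OF Aset_closed[OF fc]])
    moreover have "c (Aset X f t) * t \<le> c (Aset X f t)"
      using t cap_closed_bounds[OF capc, of "Aset X f t"] by (simp add: mult_left_le)
    ultimately show "c (Aset X f t) * t \<le> a" by linarith
  qed
  moreover have "a < (xi \<circ> MU_map X unit_interval f) d"
  proof -
    have "F \<subseteq> Aset X f 1" using f(3) closedin_subset[OF F] by (auto simp: Aset_def)
    hence "d F \<le> d (Aset X f 1)" by (rule cap_mono[OF capd F Aset_closed[OF fc]])
    also have "\<dots> = d (Aset X f 1) * 1" by simp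
    also have "\<dots> \<le> Sup ((\<lambda>t. d (Aset X f t) * t) ` {0<..1})"
      by (rule le_SUP01[where B=1]) (use G_bound[OF capd] in auto)
    finally show ?thesis using ad g_eq[OF fc] by simp
  qed
  ultimately have "(xi \<circ> MU_map X unit_interval f) c \<noteq> (xi \<circ> MU_map X unit_interval f) d" by linarith
  then show ?thesis using fc by blast
qed

theorem theorem2:
  fixes X :: "'a topology"
  shows
   "(continuous_map (MU_top unit_interval) unit_interval xi \<and>
     (\<forall>x\<in>{0..1::real}. xi (MU_eta unit_interval x) = x) \<and>
     (\<forall>C\<in>topspace (MU_top (MU_top unit_interval)).
        xi (MU_mu unit_interval C) = xi (MU_map (MU_top unit_interval) unit_interval xi C)))
    \<and>
    (compactum X \<longrightarrow>
      (\<forall>\<phi>. continuous_map X unit_interval \<phi> \<longrightarrow>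
         continuous_map (MU_top X) unit_interval (xi \<circ> MU_map X unit_interval \<phi>) \<and>
         (\<forall>C\<in>topspace (MU_top (MU_top X)).
            xi (MU_map (MU_top X) unit_interval (xi \<circ> MU_map X unit_interval \<phi>) C)
            = (xi \<circ> MU_map X unit_interval \<phi>) (MU_mu X C))) \<and>
      (\<forall>c\<in>topspace (MU_top X). \<forall>d\<in>topspace (MU_top X). c \<noteq> d \<longrightarrow>
         (\<exists>\<phi>. continuous_map X unit_interval \<phi> \<and>
              (xi \<circ> MU_map X unit_interval \<phi>) c \<noteq> (xi \<circ> MU_map X unit_interval \<phi>) d)))"
proof (intro conjI impI allI ballI)
  show "continuous_map (MU_top unit_interval) unit_interval xi"
    using g_cont[OF id_cont_I] by (simp only: xi_comp_id)
next
  fix x :: real assume "x \<in> {0..1}" then show "xi (MU_eta unit_interval x) = x" by (rule xi_eta)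
next
  fix C assume C: "C \<in> topspace (MU_top (MU_top unit_interval))"
  have "xi (MU_map (MU_top unit_interval) unit_interval (xi \<circ> MU_map unit_interval unit_interval id) C)
         = (xi \<circ> MU_map unit_interval unit_interval id) (MU_mu unit_interval C)"
    by (rule morph[OF id_cont_I C])
  then show "xi (MU_mu unit_interval C) = xi (MU_map (MU_top unit_interval) unit_interval xi C)"
    by (simp only: xi_comp_id)
next
  fix \<phi> assume "compactum X" "continuous_map X unit_interval \<phi>"
  then show "continuous_map (MU_top X) unit_interval (xi \<circ> MU_map X unit_interval \<phi>)" by (intro g_cont)
next
  fix \<phi> C assume "compactum X" "continuous_map X unit_interval \<phi>" "C \<in> topspace (MU_top (MU_top X))"
  then show "xi (MU_map (MU_top X) unit_interval (xi \<circ> MU_map X unit_interval \<phi>) C)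
            = (xi \<circ> MU_map X unit_interval \<phi>) (MU_mu X C)" by (intro morph)
next
  fix c d assume X: "compactum X" and c: "c \<in> topspace (MU_top X)" and d: "d \<in> topspace (MU_top X)" and cd: "c \<noteq> d"
  have nX: "normal_space X" using X unfolding compactum_def
    by (simp add: compact_Hausdorff_or_regular_imp_normal_space)
  have "\<exists>F. c F \<noteq> d F" using cd by (auto simp: fun_eq_iff)
  then obtain F where F: "c F \<noteq> d F" by blast
  have Fcl: "closedin X F"
  proof (rule ccontr)
    assume "\<not> closedin X F"
    hence "c F = 0" "d F = 0" using MU_cap[OF c] MU_cap[OF d] unfolding capacity_def by auto
    thus False using F by simp
  qed
  show "\<exists>\<phi>. continuous_map X unit_interval \<phi> \<and>
              (xi \<circ> MU_map X unit_interval \<phi>) c \<noteq> (xi \<circ> MU_map X unit_interval \<phi>) d"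
  proof (cases "c F < d F")
    case True then show ?thesis by (rule sep_lemma[OF nX c d Fcl])
  next
    case False
    hence "d F < c F" using F by linarith
    then obtain \<phi> where "continuous_map X unit_interval \<phi>"
        "(xi \<circ> MU_map X unit_interval \<phi>) d \<noteq> (xi \<circ> MU_map X unit_interval \<phi>) c"
      using sep_lemma[OF nX d c Fcl] by blast
    then show ?thesis by auto
  qed
qed

end
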